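(* Let $p\geq 7$ be a prime, $\zeta=e^{2\pi i/p}$, $w=(\zeta,\zeta^2,\dots,\zeta^p)\in\mathbb{C}^p$, and $\sigma\in S_p$. Let $a_1,\dots,a_p\in\mathbb{R}$, not all zero, and let $H=(a_1,\dots,a_p)^\perp$. Suppose $H$ contains both $\sigma w$ and $(ij)(kl)\sigma w$, where $i,j,k,l$ are distinct. Then either \[ \sigma^{-1}(i)+\sigma^{-1}(j)\equiv\sigma^{-1}(k)+\sigma^{-1}(l)\pmod p, \] or $a_i=a_j$ and $a_k=a_l$.
   Context: $S_p$ acts on $\mathbb{C}^p$ by permuting coordinates: the $j$-th coordinate of $\epsilon x$ is $x_{\epsilon^{-1}(j)}$. $H=(a_1,\dots,a_p)^\perp$ is $\{x\in\mathbb{C}^p:\sum_m a_mx_m=0\}$. *)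

theory Defs
  imports Complex_Main "HOL-Combinatorics.Combinatorics" "HOL-Computational_Algebra.Primes"
begin

text \<open>Vectors in C^p are functions nat => complex, coordinates indexed by 1..p.\<close>

definition zeta :: "nat \<Rightarrow> complex" where
  "zeta p = cis (2 * pi / real p)"

definition wvec :: "nat \<Rightarrow> nat \<Rightarrow> complex" where
  "wvec p = (\<lambda>m. zeta p ^ m)"

definition perm_act :: "(nat \<Rightarrow> nat) \<Rightarrow> (nat \<Rightarrow> complex) \<Rightarrow> (nat \<Rightarrow> complex)" where
  "perm_act e x = (\<lambda>j. x (inv e j))"

definition hyperplane :: "nat \<Rightarrow> (nat \<Rightarrow> real) \<Rightarrow> (nat \<Rightarrow> complex) set" where
  "hyperplane p a = {x. (\<Sum>m=1..p. complex_of_real (a m) * x m) = 0}"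

end

theory Submission
  imports Defs
begin

lemma cis_diff: "cis a - cis b = 2 * \<i> * complex_of_real (sin ((a-b)/2)) * cis ((a+b)/2)"
proof -
  have 1: "cis a = cis ((a+b)/2) * cis ((a-b)/2)" by (simp add: cis_mult field_simps)
  have 2: "cis b = cis ((a+b)/2) * cis (-((a-b)/2))" by (simp add: cis_mult field_simps)
  have 3: "cis c - cis (-c) = 2 * \<i> * complex_of_real (sin c)" for c
    by (simp add: complex_eq_iff)
  show ?thesis unfolding 1 2 using 3[of "(a-b)/2"]
    by (metis (no_types, lifting) mult.commute right_diff_distrib)
qed

lemma sin_nz:
  fixes p u v :: nat
  assumes "u \<in> {1..p}" "v \<in> {1..p}" "u \<noteq> v"
  shows "sin ((2*pi*u/p - 2*pi*v/p)/2) \<noteq> 0"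
proof
  assume "sin ((2*pi*u/p - 2*pi*v/p)/2) = 0"
  then obtain n :: int where n: "(2*pi*u/p - 2*pi*v/p)/2 = n * pi" using sin_zero_iff_int2 by blast
  have pp: "p > 0" using assms by auto
  have h: "(2*pi*u/p - 2*pi*v/p)/2 = pi * ((real u - real v)/p)" using pp by (simp add: field_simps)
  have "pi * ((real u - real v)/p) = pi * n" using h n by (metis mult.commute)
  hence "(real u - real v)/p = n" by (metis mult_cancel_left pi_neq_zero)
  hence "real u - real v = n * p" using pp by (simp add: field_simps)
  hence e: "int u - int v = n * int p" by (metis of_int_eq_iff of_int_of_nat_eq of_int_diff of_int_mult)
  have "\<bar>int u - int v\<bar> < int p" "int u \<noteq> int v" using assms by auto
  with e show False
    by (smt (verit, best) mult_le_cancel_right1 mult_minus_left abs_mult abs_of_nat of_nat_0_less_iff pp zero_less_abs_iff)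
qed

lemma arith1: "(P::real) > 0 \<Longrightarrow> (2*pi*x/P + 2*pi*y/P)/2 - (2*pi*z/P + 2*pi*w/P)/2 = pi * (((x+y) - (z+w))/P)"
  by (simp add: field_simps)

lemma key:
  fixes p u v s t :: nat and \<alpha> \<beta> :: real
  assumes "u \<in> {1..p}" "v \<in> {1..p}" "s \<in> {1..p}" "t \<in> {1..p}" "u \<noteq> v" "s \<noteq> t"
  and eq: "complex_of_real \<alpha> * (cis (2*pi*u/p) - cis (2*pi*v/p))
         + complex_of_real \<beta> * (cis (2*pi*s/p) - cis (2*pi*t/p)) = 0"
  shows "(u+v) mod p = (s+t) mod p \<or> (\<alpha> = 0 \<and> \<beta> = 0)"
proof (cases "\<alpha> = 0")
  case True
  have "sin ((2*pi*s/p - 2*pi*t/p)/2) \<noteq> 0" using sin_nz[OF assms(3,4,6)] .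
  moreover have "complex_of_real \<beta> * (cis (2*pi*s/p) - cis (2*pi*t/p)) = 0" using eq True by simp
  ultimately have "\<beta> = 0" unfolding cis_diff by (simp add: cis_neq_zero)
  then show ?thesis using True by simp
next
  case False
  define S1 where "S1 = sin ((2*pi*u/p - 2*pi*v/p)/2)"
  define S2 where "S2 = sin ((2*pi*s/p - 2*pi*t/p)/2)"
  define A where "A = (2*pi*u/p + 2*pi*v/p)/2"
  define B where "B = (2*pi*s/p + 2*pi*t/p)/2"
  have S1: "S1 \<noteq> 0" unfolding S1_def using sin_nz[OF assms(1,2,5)] .
  have E: "complex_of_real \<alpha> * (2 * \<i> * S1 * cis A) + complex_of_real \<beta> * (2 * \<i> * S2 * cis B) = 0"
    using eq unfolding cis_diff S1_def S2_def A_def B_def .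
  have cA: "cis A = cis (A-B) * cis B" by (simp add: cis_mult)
  have X: "(2*\<i>*cis B) * (complex_of_real (\<alpha> * S1) * cis (A - B) + complex_of_real (\<beta> * S2))
     = complex_of_real \<alpha> * (2 * \<i> * S1 * cis A) + complex_of_real \<beta> * (2 * \<i> * S2 * cis B)"
    unfolding cA by (simp add: algebra_simps)
  have "(2*\<i>*cis B) * (complex_of_real (\<alpha> * S1) * cis (A - B) + complex_of_real (\<beta> * S2)) = 0"
    unfolding X by (rule E)
  moreover have "2*\<i>*cis B \<noteq> 0" by (simp add: cis_neq_zero)
  ultimately have "complex_of_real (\<alpha> * S1) * cis (A - B) + complex_of_real (\<beta> * S2) = 0"
    by (metis no_zero_divisors)
  hence "Im (complex_of_real (\<alpha> * S1) * cis (A - B) + complex_of_real (\<beta> * S2)) = 0" by simp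
  hence "\<alpha> * S1 * sin (A - B) = 0" by simp
  hence sAB: "sin (A - B) = 0" using S1 False by simp
  have pp: "p > 0" using assms by auto
  from sAB obtain n :: int where n: "A - B = n * pi" using sin_zero_iff_int2 by blast
  have h: "A - B = pi * (((real u + real v) - (real s + real t))/p)" unfolding A_def B_def
    using pp by (intro arith1) simp
  have "pi * (((real u + real v) - (real s + real t))/p) = pi * n" using h n by (metis mult.commute)
  hence "((real u + real v) - (real s + real t))/p = n" by (metis mult_cancel_left pi_neq_zero)
  hence "(real u + real v) - (real s + real t) = n * p" using pp by (simp add: divide_eq_eq)
  hence "real (u+v) - real (s+t) = n * p" by (simp only: of_nat_add)
  hence "of_int (int (u+v) - int (s+t)) = (of_int (n * int p) :: real)" by (simp only: of_int_diff of_int_of_nat_eq)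
  hence e: "int (u+v) - int (s+t) = n * int p" by (simp only: of_int_eq_iff)
  hence "int p dvd int (u+v) - int (s+t)" by simp
  hence "int (u+v) mod int p = int (s+t) mod int p" by (simp only: mod_eq_dvd_iff)
  hence "(u+v) mod p = (s+t) mod p" by (simp only: zmod_int[symmetric] of_nat_eq_iff)
  thus ?thesis by simp
qed
lemma zeta_pow: "zeta p ^ n = cis (2*pi*real n/real p)"
  unfolding zeta_def DeMoivre by (simp add: mult.commute)

theorem lemma4p7:
  fixes p :: nat and \<sigma> :: "nat \<Rightarrow> nat" and a :: "nat \<Rightarrow> real" and i j k l :: nat
  assumes "prime p" and "p \<ge> 7"
    and "\<sigma> permutes {1..p}"
    and "\<exists>m\<in>{1..p}. a m \<noteq> 0"
    and "i \<in> {1..p}" "j \<in> {1..p}" "k \<in> {1..p}" "l \<in> {1..p}"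
    and "distinct [i, j, k, l]"
    and "perm_act \<sigma> (wvec p) \<in> hyperplane p a"
    and "perm_act (transpose i j \<circ> transpose k l \<circ> \<sigma>) (wvec p) \<in> hyperplane p a"
  shows "(inv \<sigma> i + inv \<sigma> j) mod p = (inv \<sigma> k + inv \<sigma> l) mod p
         \<or> (a i = a j \<and> a k = a l)"
proof -
  define x where "x = perm_act \<sigma> (wvec p)"
  define t where "t = transpose k l \<circ> transpose i j"
  have bs: "bij \<sigma>" using assms(3) by (rule permutes_bij)
  have binv: "inv (transpose i j \<circ> transpose k l \<circ> \<sigma>) = inv \<sigma> \<circ> t"
  proof -
    have "inv (transpose i j \<circ> transpose k l \<circ> \<sigma>) = inv \<sigma> \<circ> inv (transpose i j \<circ> transpose k l)"
      by (rule o_inv_distrib) (simp_all add: bs bij_comp)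
    also have "inv (transpose i j \<circ> transpose k l) = transpose k l \<circ> transpose i j"
      by (subst o_inv_distrib) simp_all
    finally show ?thesis unfolding t_def .
  qed
  have y: "perm_act (transpose i j \<circ> transpose k l \<circ> \<sigma>) (wvec p) = (\<lambda>m. x (t m))"
    unfolding perm_act_def x_def binv by simp
  have s1: "(\<Sum>m=1..p. complex_of_real (a m) * x m) = 0" using assms(10) unfolding x_def hyperplane_def by simp
  have s2: "(\<Sum>m=1..p. complex_of_real (a m) * x (t m)) = 0" using assms(11) unfolding y hyperplane_def by simp
  define g where "g = (\<lambda>m. complex_of_real (a m) * (x m - x (t m)))"
  have "(\<Sum>m=1..p. g m) = 0" unfolding g_def using s1 s2 by (simp add: algebra_simps sum_subtractf)
  moreover have "(\<Sum>m\<in>{i,j,k,l}. g m) = (\<Sum>m=1..p. g m)"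
  proof (rule sum.mono_neutral_left)
    show "{i,j,k,l} \<subseteq> {1..p}" using assms(5-8) by auto
    show "\<forall>m\<in>{1..p} - {i,j,k,l}. g m = 0" unfolding g_def t_def by auto
  qed simp
  moreover have "(\<Sum>m\<in>{i,j,k,l}. g m) = g i + g j + g k + g l"
    using assms(9) by (simp add: add.assoc)
  ultimately have "g i + g j + g k + g l = 0" by simp
  moreover have "t i = j" "t j = i" "t k = l" "t l = k" using assms(9) unfolding t_def by auto
  ultimately have "complex_of_real (a i - a j) * (x i - x j) + complex_of_real (a k - a l) * (x k - x l) = 0"
    unfolding g_def by (simp add: algebra_simps)
  moreover have "x m = cis (2*pi*real (inv \<sigma> m)/real p)" for m
    unfolding x_def perm_act_def wvec_def zeta_pow ..
  ultimately have eq: "complex_of_real (a i - a j) * (cis (2*pi*real (inv \<sigma> i)/real p) - cis (2*pi*real (inv \<sigma> j)/real p))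
      + complex_of_real (a k - a l) * (cis (2*pi*real (inv \<sigma> k)/real p) - cis (2*pi*real (inv \<sigma> l)/real p)) = 0"
    by simp
  have pi: "inv \<sigma> permutes {1..p}" using assms(3) by (rule permutes_inv)
  have inj: "inj (inv \<sigma>)" using pi by (rule permutes_inj)
  have mem: "inv \<sigma> m \<in> {1..p}" if "m \<in> {1..p}" for m
    using permutes_in_image[OF pi] that by blast
  have ne1: "inv \<sigma> i \<noteq> inv \<sigma> j" using inj assms(9) by (auto dest: injD)
  have ne2: "inv \<sigma> k \<noteq> inv \<sigma> l" using inj assms(9) by (auto dest: injD)
  from key[OF mem[OF assms(5)] mem[OF assms(6)] mem[OF assms(7)] mem[OF assms(8)] ne1 ne2 eq]
  show ?thesis by simp
qed

end
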